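(* Let $P\in\Delta$ with $\mathcal Y=\mathcal Z$, and suppose that the marginal distributions of the pairs $(X,Y)$ and $(X,Z)$ are identical, i.e. $P(X=x,Y=w)=P(X=x,Z=w)$ for all $x\in\mathcal X$, $w\in\mathcal Y$. Then $\widetilde{UI}(X:Y\setminus Z)=\widetilde{UI}(X:Z\setminus Y)=0$, $\widetilde{SI}(X:Y;Z)=MI(X:Y)=MI(X:Z)$, and $\widetilde{CI}(X:Y;Z)=MI(X:Y|Z)=MI(X:Z|Y)$.
   Context: $X,Y,Z$ are random variables with finite state spaces $\mathcal X,\mathcal Y,\mathcal Z$. $\Delta$ denotes the set of all probability distributions on $\mathcal X\times\mathcal Y\times\mathcal Z$; $P\in\Delta$ is the joint distribution (unsubscripted quantities refer to $P$), a subscript $Q$ means computed w.r.t. $Q\in\Delta$. $\Delta_P=\{Q\in\Delta: Q(X=x,Y=y)=P(X=x,Y=y)\text{ and }Q(X=x,Z=z)=P(X=x,Z=z)\ \forall x,y,z\}$. $CoI_Q(X;Y;Z)=MI_Q(X:Y)-MI_Q(X:Y|Z)$. Define $\widetilde{UI}(X:Y\setminus Z)=\min_{Q\in\Delta_P}MI_Q(X:Y|Z)$, $\widetilde{UI}(X:Z\setminus Y)=\min_{Q\in\Delta_P}MI_Q(X:Z|Y)$, $\widetilde{SI}(X:Y;Z)=\max_{Q\in\Delta_P}CoI_Q(X;Y;Z)$, $\widetilde{CI}(X:Y;Z)=MI(X:(Y,Z))-\min_{Q\in\Delta_P}MI_Q(X:(Y,Z))$. *)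

theory Defs
  imports "HOL-Analysis.Analysis"
begin

text \<open>A joint distribution of (X,Y,Z) on finite state spaces (the finite types 'x, 'y, 'z)
  is given by its probability mass function Q x y z = Q(X=x, Y=y, Z=z).\<close>

definition distr :: "('x::finite \<Rightarrow> 'y::finite \<Rightarrow> 'z::finite \<Rightarrow> real) \<Rightarrow> bool" where
  "distr Q \<longleftrightarrow> (\<forall>x y z. 0 \<le> Q x y z) \<and> (\<Sum>x\<in>UNIV. \<Sum>y\<in>UNIV. \<Sum>z\<in>UNIV. Q x y z) = 1"

definition pXY :: "('x::finite \<Rightarrow> 'y::finite \<Rightarrow> 'z::finite \<Rightarrow> real) \<Rightarrow> 'x \<Rightarrow> 'y \<Rightarrow> real" where
  "pXY Q x y = (\<Sum>z\<in>UNIV. Q x y z)"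
definition pXZ :: "('x::finite \<Rightarrow> 'y::finite \<Rightarrow> 'z::finite \<Rightarrow> real) \<Rightarrow> 'x \<Rightarrow> 'z \<Rightarrow> real" where
  "pXZ Q x z = (\<Sum>y\<in>UNIV. Q x y z)"
definition pYZ :: "('x::finite \<Rightarrow> 'y::finite \<Rightarrow> 'z::finite \<Rightarrow> real) \<Rightarrow> 'y \<Rightarrow> 'z \<Rightarrow> real" where
  "pYZ Q y z = (\<Sum>x\<in>UNIV. Q x y z)"
definition pX :: "('x::finite \<Rightarrow> 'y::finite \<Rightarrow> 'z::finite \<Rightarrow> real) \<Rightarrow> 'x \<Rightarrow> real" where
  "pX Q x = (\<Sum>y\<in>UNIV. \<Sum>z\<in>UNIV. Q x y z)"
definition pY :: "('x::finite \<Rightarrow> 'y::finite \<Rightarrow> 'z::finite \<Rightarrow> real) \<Rightarrow> 'y \<Rightarrow> real" where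
  "pY Q y = (\<Sum>x\<in>UNIV. \<Sum>z\<in>UNIV. Q x y z)"
definition pZ :: "('x::finite \<Rightarrow> 'y::finite \<Rightarrow> 'z::finite \<Rightarrow> real) \<Rightarrow> 'z \<Rightarrow> real" where
  "pZ Q z = (\<Sum>x\<in>UNIV. \<Sum>y\<in>UNIV. Q x y z)"

definition plog :: "real \<Rightarrow> real \<Rightarrow> real" where
  "plog a b = (if a = 0 then 0 else a * log 2 (a / b))"

definition MI_XY :: "('x::finite \<Rightarrow> 'y::finite \<Rightarrow> 'z::finite \<Rightarrow> real) \<Rightarrow> real" where
  "MI_XY Q = (\<Sum>x\<in>UNIV. \<Sum>y\<in>UNIV. plog (pXY Q x y) (pX Q x * pY Q y))"
definition MI_XZ :: "('x::finite \<Rightarrow> 'y::finite \<Rightarrow> 'z::finite \<Rightarrow> real) \<Rightarrow> real" where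
  "MI_XZ Q = (\<Sum>x\<in>UNIV. \<Sum>z\<in>UNIV. plog (pXZ Q x z) (pX Q x * pZ Q z))"
definition CMI_XY_Z :: "('x::finite \<Rightarrow> 'y::finite \<Rightarrow> 'z::finite \<Rightarrow> real) \<Rightarrow> real" where
  "CMI_XY_Z Q = (\<Sum>x\<in>UNIV. \<Sum>y\<in>UNIV. \<Sum>z\<in>UNIV. plog (Q x y z) (pXZ Q x z * pYZ Q y z / pZ Q z))"
definition CMI_XZ_Y :: "('x::finite \<Rightarrow> 'y::finite \<Rightarrow> 'z::finite \<Rightarrow> real) \<Rightarrow> real" where
  "CMI_XZ_Y Q = (\<Sum>x\<in>UNIV. \<Sum>y\<in>UNIV. \<Sum>z\<in>UNIV. plog (Q x y z) (pXY Q x y * pYZ Q y z / pY Q y))"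
definition MI_X_YZ :: "('x::finite \<Rightarrow> 'y::finite \<Rightarrow> 'z::finite \<Rightarrow> real) \<Rightarrow> real" where
  "MI_X_YZ Q = (\<Sum>x\<in>UNIV. \<Sum>y\<in>UNIV. \<Sum>z\<in>UNIV. plog (Q x y z) (pX Q x * pYZ Q y z))"
definition CoI :: "('x::finite \<Rightarrow> 'y::finite \<Rightarrow> 'z::finite \<Rightarrow> real) \<Rightarrow> real" where
  "CoI Q = MI_XY Q - CMI_XY_Z Q"

definition DeltaP :: "('x::finite \<Rightarrow> 'y::finite \<Rightarrow> 'z::finite \<Rightarrow> real) \<Rightarrow> ('x \<Rightarrow> 'y \<Rightarrow> 'z \<Rightarrow> real) set" where
  "DeltaP P = {Q. distr Q \<and> pXY Q = pXY P \<and> pXZ Q = pXZ P}"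

text \<open>The min/max over the compact set Delta_P are attained; written as Inf/Sup.\<close>
definition UI_Y :: "('x::finite \<Rightarrow> 'y::finite \<Rightarrow> 'z::finite \<Rightarrow> real) \<Rightarrow> real" where
  "UI_Y P = (INF Q\<in>DeltaP P. CMI_XY_Z Q)"
definition UI_Z :: "('x::finite \<Rightarrow> 'y::finite \<Rightarrow> 'z::finite \<Rightarrow> real) \<Rightarrow> real" where
  "UI_Z P = (INF Q\<in>DeltaP P. CMI_XZ_Y Q)"
definition SI :: "('x::finite \<Rightarrow> 'y::finite \<Rightarrow> 'z::finite \<Rightarrow> real) \<Rightarrow> real" where
  "SI P = (SUP Q\<in>DeltaP P. CoI Q)"
definition CI :: "('x::finite \<Rightarrow> 'y::finite \<Rightarrow> 'z::finite \<Rightarrow> real) \<Rightarrow> real" where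
  "CI P = MI_X_YZ P - (INF Q\<in>DeltaP P. MI_X_YZ Q)"

end

theory Submission
  imports Defs
begin

lemma plog_ge:
  assumes "0 \<le> (a::real)" "0 \<le> b" "0 < a \<Longrightarrow> 0 < b"
  shows "(a - b) / ln 2 \<le> plog a b"
proof (cases "a = 0")
  case True thus ?thesis using assms by (simp add: plog_def divide_nonpos_pos)
next
  case False
  hence a: "a > 0" using assms by simp
  hence b: "b > 0" using assms by simp
  have "ln (b/a) \<le> b/a - 1" using a b by (intro ln_le_minus_one) simp
  hence "a * ln (b/a) \<le> a * (b/a - 1)" using a by (intro mult_left_mono) auto
  moreover have "a * (b/a - 1) = b - a" using a by (simp add: right_diff_distrib)
  ultimately have "a * ln (b/a) \<le> b - a" by simp
  moreover have "ln (a/b) = - ln (b/a)" using a b by (simp add: ln_div)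
  ultimately have "a - b \<le> a * ln (a/b)" by simp
  hence "(a - b)/ln 2 \<le> a * ln (a/b) / ln 2" by (simp add: divide_right_mono)
  thus ?thesis using False by (simp add: plog_def log_def)
qed

lemma distr_nonneg: "distr Q \<Longrightarrow> 0 \<le> Q x y z"
  by (simp add: distr_def)

lemma le_sum1: "(\<And>j. 0 \<le> f j) \<Longrightarrow> (f i::real) \<le> (\<Sum>j\<in>(UNIV::'a::finite set). f j)"
  by (rule member_le_sum) auto

lemma pos_marg:
  fixes Q :: "'x::finite \<Rightarrow> 'y::finite \<Rightarrow> 'z::finite \<Rightarrow> real"
  assumes d: "distr Q" and q: "Q x y z > 0"
  shows "pXZ Q x z > 0" "pYZ Q y z > 0" "pZ Q z > 0" "pX Q x > 0" "pXY Q x y > 0" "pY Q y > 0"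
proof -
  note nn = distr_nonneg[OF d]
  have a: "Q x y z \<le> pXZ Q x z" unfolding pXZ_def by (rule le_sum1) (simp add: nn)
  have b: "Q x y z \<le> pYZ Q y z" unfolding pYZ_def by (rule le_sum1) (simp add: nn)
  have c: "Q x y z \<le> pXY Q x y" unfolding pXY_def by (rule le_sum1) (simp add: nn)
  have "pXZ Q x z \<le> pZ Q z" unfolding pZ_def pXZ_def by (rule le_sum1) (simp add: nn sum_nonneg)
  moreover have "pXY Q x y \<le> pX Q x" unfolding pX_def pXY_def by (rule le_sum1) (simp add: nn sum_nonneg)
  moreover have "pXY Q x y \<le> pY Q y" unfolding pY_def pXY_def by (rule le_sum1) (simp add: nn sum_nonneg)
  ultimately show "pXZ Q x z > 0" "pYZ Q y z > 0" "pZ Q z > 0" "pX Q x > 0" "pXY Q x y > 0" "pY Q y > 0"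
    using a b c q by linarith+
qed

lemma marg_nonneg:
  fixes Q :: "'x::finite \<Rightarrow> 'y::finite \<Rightarrow> 'z::finite \<Rightarrow> real"
  assumes d: "distr Q"
  shows "pXZ Q x z \<ge> 0" "pYZ Q y z \<ge> 0" "pZ Q z \<ge> 0" "pX Q x \<ge> 0" "pXY Q x y \<ge> 0" "pY Q y \<ge> 0"
  using distr_nonneg[OF d] by (auto simp: pXZ_def pYZ_def pZ_def pX_def pXY_def pY_def intro!: sum_nonneg)

lemma chain1:
  fixes Q :: "'x::finite \<Rightarrow> 'y::finite \<Rightarrow> 'z::finite \<Rightarrow> real"
  assumes d: "distr Q"
  shows "MI_X_YZ Q = MI_XZ Q + CMI_XY_Z Q"
proof -
  have tm: "plog (Q x y z) (pX Q x * pYZ Q y z) =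
     Q x y z * log 2 (pXZ Q x z / (pX Q x * pZ Q z)) + plog (Q x y z) (pXZ Q x z * pYZ Q y z / pZ Q z)"
    for x y z
  proof (cases "Q x y z = 0")
    case True thus ?thesis by (simp add: plog_def)
  next
    case False
    hence q: "Q x y z > 0" using distr_nonneg[OF d, of x y z] by simp
    note p = pos_marg[OF d q]
    have "log 2 (Q x y z / (pX Q x * pYZ Q y z)) =
      log 2 ((pXZ Q x z / (pX Q x * pZ Q z)) * (Q x y z / (pXZ Q x z * pYZ Q y z / pZ Q z)))"
      using p q by (simp add: field_simps)
    also have "\<dots> = log 2 (pXZ Q x z / (pX Q x * pZ Q z)) + log 2 (Q x y z / (pXZ Q x z * pYZ Q y z / pZ Q z))"
      using p q by (subst log_mult) auto
    finally show ?thesis using False by (simp add: plog_def distrib_left)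
  qed
  have "MI_X_YZ Q = (\<Sum>x\<in>UNIV. \<Sum>y\<in>UNIV. \<Sum>z\<in>UNIV. Q x y z * log 2 (pXZ Q x z / (pX Q x * pZ Q z))) + CMI_XY_Z Q"
    unfolding MI_X_YZ_def CMI_XY_Z_def tm by (simp add: sum.distrib)
  also have "(\<Sum>x\<in>UNIV. \<Sum>y\<in>UNIV. \<Sum>z\<in>UNIV. Q x y z * log 2 (pXZ Q x z / (pX Q x * pZ Q z)))
     = (\<Sum>x\<in>UNIV. \<Sum>z\<in>UNIV. \<Sum>y\<in>UNIV. Q x y z * log 2 (pXZ Q x z / (pX Q x * pZ Q z)))"
    by (rule sum.cong[OF refl], rule sum.swap)
  also have "\<dots> = (\<Sum>x\<in>UNIV. \<Sum>z\<in>UNIV. pXZ Q x z * log 2 (pXZ Q x z / (pX Q x * pZ Q z)))"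
    by (simp add: pXZ_def sum_distrib_right)
  also have "\<dots> = MI_XZ Q"
    unfolding MI_XZ_def by (intro sum.cong refl) (simp add: plog_def)
  finally show ?thesis .
qed

lemma chain2:
  fixes Q :: "'x::finite \<Rightarrow> 'y::finite \<Rightarrow> 'z::finite \<Rightarrow> real"
  assumes d: "distr Q"
  shows "MI_X_YZ Q = MI_XY Q + CMI_XZ_Y Q"
proof -
  have tm: "plog (Q x y z) (pX Q x * pYZ Q y z) =
     Q x y z * log 2 (pXY Q x y / (pX Q x * pY Q y)) + plog (Q x y z) (pXY Q x y * pYZ Q y z / pY Q y)"
    for x y z
  proof (cases "Q x y z = 0")
    case True thus ?thesis by (simp add: plog_def)
  next
    case False
    hence q: "Q x y z > 0" using distr_nonneg[OF d, of x y z] by simp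
    note p = pos_marg[OF d q]
    have "log 2 (Q x y z / (pX Q x * pYZ Q y z)) =
      log 2 ((pXY Q x y / (pX Q x * pY Q y)) * (Q x y z / (pXY Q x y * pYZ Q y z / pY Q y)))"
      using p q by (simp add: field_simps)
    also have "\<dots> = log 2 (pXY Q x y / (pX Q x * pY Q y)) + log 2 (Q x y z / (pXY Q x y * pYZ Q y z / pY Q y))"
      using p q by (subst log_mult) auto
    finally show ?thesis using False by (simp add: plog_def distrib_left)
  qed
  have "MI_X_YZ Q = (\<Sum>x\<in>UNIV. \<Sum>y\<in>UNIV. \<Sum>z\<in>UNIV. Q x y z * log 2 (pXY Q x y / (pX Q x * pY Q y))) + CMI_XZ_Y Q"
    unfolding MI_X_YZ_def CMI_XZ_Y_def tm by (simp add: sum.distrib)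
  also have "(\<Sum>x\<in>UNIV. \<Sum>y\<in>UNIV. \<Sum>z\<in>UNIV. Q x y z * log 2 (pXY Q x y / (pX Q x * pY Q y)))
     = (\<Sum>x\<in>UNIV. \<Sum>y\<in>UNIV. pXY Q x y * log 2 (pXY Q x y / (pX Q x * pY Q y)))"
    by (simp add: pXY_def sum_distrib_right)
  also have "\<dots> = MI_XY Q"
    unfolding MI_XY_def by (intro sum.cong refl) (simp add: plog_def)
  finally show ?thesis .
qed


lemma sumQ:
  fixes Q :: "'x::finite \<Rightarrow> 'y::finite \<Rightarrow> 'z::finite \<Rightarrow> real"
  assumes d: "distr Q"
  shows "(\<Sum>z\<in>UNIV. pZ Q z) = 1"
proof -
  have "(\<Sum>z\<in>UNIV. pZ Q z) = (\<Sum>x\<in>UNIV. \<Sum>z\<in>UNIV. \<Sum>y\<in>UNIV. Q x y z)"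
    unfolding pZ_def by (rule sum.swap)
  also have "\<dots> = (\<Sum>x\<in>UNIV. \<Sum>y\<in>UNIV. \<Sum>z\<in>UNIV. Q x y z)"
    by (rule sum.cong[OF refl], rule sum.swap)
  also have "\<dots> = 1" using d by (simp add: distr_def)
  finally show ?thesis .
qed

lemma CMI_nonneg:
  fixes Q :: "'x::finite \<Rightarrow> 'y::finite \<Rightarrow> 'z::finite \<Rightarrow> real"
  assumes d: "distr Q"
  shows "0 \<le> CMI_XY_Z Q"
proof -
  define B where "B x y z = pXZ Q x z * pYZ Q y z / pZ Q z" for x y z
  note mn = marg_nonneg[OF d]
  have "(\<Sum>x\<in>UNIV. \<Sum>y\<in>UNIV. \<Sum>z\<in>UNIV. (Q x y z - B x y z) / ln 2) \<le> CMI_XY_Z Q"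
    unfolding CMI_XY_Z_def B_def
    by (intro sum_mono plog_ge) (auto simp: distr_nonneg[OF d] mn pos_marg[OF d])
  moreover have "(\<Sum>x\<in>UNIV. \<Sum>y\<in>UNIV. \<Sum>z\<in>UNIV. (Q x y z - B x y z) / ln 2)
     = ((\<Sum>x\<in>UNIV. \<Sum>y\<in>UNIV. \<Sum>z\<in>UNIV. Q x y z) - (\<Sum>x\<in>UNIV. \<Sum>y\<in>UNIV. \<Sum>z\<in>UNIV. B x y z)) / ln 2"
    by (simp add: sum_divide_distrib[symmetric] sum_subtractf)
  moreover have "(\<Sum>x\<in>UNIV. \<Sum>y\<in>UNIV. \<Sum>z\<in>UNIV. B x y z) = 1"
  proof -
    have "(\<Sum>x\<in>UNIV. \<Sum>y\<in>UNIV. \<Sum>z\<in>UNIV. B x y z) = (\<Sum>x\<in>UNIV. \<Sum>z\<in>UNIV. \<Sum>y\<in>UNIV. B x y z)"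
      by (rule sum.cong[OF refl], rule sum.swap)
    also have "\<dots> = (\<Sum>z\<in>UNIV. \<Sum>x\<in>UNIV. \<Sum>y\<in>UNIV. B x y z)" by (rule sum.swap)
    also have "\<dots> = (\<Sum>z\<in>UNIV. pZ Q z)"
    proof (rule sum.cong[OF refl])
      fix z
      have s1: "(\<Sum>y\<in>UNIV. pYZ Q y z) = pZ Q z" unfolding pYZ_def pZ_def by (rule sum.swap)
      have s2: "(\<Sum>x\<in>UNIV. pXZ Q x z) = pZ Q z" unfolding pXZ_def pZ_def by simp
      have "(\<Sum>x\<in>UNIV. \<Sum>y\<in>UNIV. B x y z) = (\<Sum>x\<in>UNIV. pXZ Q x z * (\<Sum>y\<in>UNIV. pYZ Q y z) / pZ Q z)"
        unfolding B_def by (simp add: sum_distrib_left sum_divide_distrib)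
      also have "\<dots> = (\<Sum>x\<in>UNIV. pXZ Q x z) * pZ Q z / pZ Q z"
        unfolding s1 by (simp add: sum_distrib_right sum_divide_distrib)
      also have "\<dots> = pZ Q z" unfolding s2 by simp
      finally show "(\<Sum>x\<in>UNIV. \<Sum>y\<in>UNIV. B x y z) = pZ Q z" .
    qed
    also have "\<dots> = 1" by (rule sumQ[OF d])
    finally show ?thesis .
  qed
  ultimately show ?thesis using d by (simp add: distr_def)
qed

lemma MI_XY_alt:
  "MI_XY Q = (\<Sum>x\<in>UNIV. \<Sum>y\<in>UNIV. plog (pXY Q x y) ((\<Sum>y'\<in>UNIV. pXY Q x y') * (\<Sum>x'\<in>UNIV. pXY Q x' y)))"
  unfolding MI_XY_def pX_def pY_def pXY_def by simp

lemma MI_XZ_alt: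
  "MI_XZ Q = (\<Sum>x\<in>UNIV. \<Sum>z\<in>UNIV. plog (pXZ Q x z) ((\<Sum>z'\<in>UNIV. pXZ Q x z') * (\<Sum>x'\<in>UNIV. pXZ Q x' z)))"
proof -
  have "pX Q x = (\<Sum>z'\<in>UNIV. pXZ Q x z')" for x unfolding pX_def pXZ_def by (rule sum.swap)
  moreover have "pZ Q z = (\<Sum>x'\<in>UNIV. pXZ Q x' z)" for z unfolding pZ_def pXZ_def by simp
  ultimately show ?thesis unfolding MI_XZ_def by simp
qed

theorem mainTheorem5:
  fixes P :: "'x::finite \<Rightarrow> 'y::finite \<Rightarrow> 'y \<Rightarrow> real"
  assumes "distr P"
    and "\<forall>x w. pXY P x w = pXZ P x w"
  shows "UI_Y P = 0 \<and> UI_Z P = 0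
    \<and> SI P = MI_XY P \<and> MI_XY P = MI_XZ P
    \<and> CI P = CMI_XY_Z P \<and> CMI_XY_Z P = CMI_XZ_Y P"
proof -
  have eqm: "pXZ P = pXY P" using assms(2) by (auto intro!: ext)
  have MIeq: "MI_XY P = MI_XZ P" unfolding MI_XY_alt MI_XZ_alt eqm ..
  have inv: "MI_XY Q = MI_XY P" "MI_XZ Q = MI_XZ P" if "Q \<in> DeltaP P" for Q
    using that unfolding DeltaP_def MI_XY_alt[of Q] MI_XY_alt[of P] MI_XZ_alt[of Q] MI_XZ_alt[of P] by auto
  define Q0 where "Q0 x y z = (if y = z then pXY P x y else 0)" for x and y z :: 'y
  have Q0XY: "pXY Q0 = pXY P" unfolding pXY_def Q0_def by (auto intro!: ext)
  have Q0XZ: "pXZ Q0 = pXZ P" unfolding pXZ_def Q0_def eqm[symmetric] by (auto intro!: ext)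
  have Q0d: "distr Q0"
  proof -
    have "(\<Sum>x\<in>UNIV. \<Sum>y\<in>UNIV. \<Sum>z\<in>UNIV. Q0 x y z) = (\<Sum>x\<in>UNIV. \<Sum>y\<in>UNIV. pXY Q0 x y)"
      unfolding pXY_def ..
    also have "\<dots> = (\<Sum>x\<in>UNIV. pX P x)" unfolding Q0XY pXY_def pX_def ..
    also have "\<dots> = 1" using assms(1) by (simp add: distr_def pX_def)
    finally show ?thesis unfolding distr_def Q0_def using marg_nonneg[OF assms(1)] by auto
  qed
  have Q0D: "Q0 \<in> DeltaP P" using Q0d Q0XY Q0XZ by (simp add: DeltaP_def)
  have Q0C: "CMI_XY_Z Q0 = 0"
    unfolding CMI_XY_Z_def
  proof (intro sum.neutral ballI)
    fix x y z
    show "plog (Q0 x y z) (pXZ Q0 x z * pYZ Q0 y z / pZ Q0 z) = 0"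
    proof (cases "y = z \<and> pXY P x y \<noteq> 0")
      case False thus ?thesis by (auto simp: Q0_def plog_def)
    next
      case True
      have a: "pXZ Q0 x z = pXY P x y" using True by (simp add: Q0XZ eqm)
      have b: "pYZ Q0 y z = pY P y" using True unfolding pYZ_def Q0_def pY_def pXY_def by simp
      have c: "pZ Q0 z = pY P y" using True unfolding pZ_def Q0_def pY_def pXY_def by simp
      have "pXY P x y \<le> pY P y" unfolding pY_def pXY_def
        by (rule le_sum1) (simp add: sum_nonneg distr_nonneg[OF assms(1)])
      moreover have "pXY P x y \<ge> 0" using marg_nonneg[OF assms(1)] by simp
      ultimately have "pY P y > 0" using True by linarith
      thus ?thesis using True a b c by (simp add: plog_def Q0_def)
    qed
  qed
  have DC: "distr Q" if "Q \<in> DeltaP P" for Q using that by (simp add: DeltaP_def)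
  have C2: "CMI_XZ_Y Q = CMI_XY_Z Q" if "Q \<in> DeltaP P" for Q
    using chain1[OF DC[OF that]] chain2[OF DC[OF that]] inv[OF that] MIeq by linarith
  have UIY: "UI_Y P = 0" unfolding UI_Y_def
    by (rule cInf_eq_minimum) (use Q0D Q0C CMI_nonneg DC in auto)
  have UIZ: "UI_Z P = 0"
  proof -
    have "CMI_XZ_Y ` DeltaP P = CMI_XY_Z ` DeltaP P" using C2 by (rule image_cong[OF refl])
    thus ?thesis using UIY unfolding UI_Z_def UI_Y_def by simp
  qed
  have SIP: "SI P = MI_XY P" unfolding SI_def
    by (rule cSup_eq_maximum) (use Q0D Q0C CMI_nonneg DC inv in \<open>auto simp: CoI_def intro!: CMI_nonneg DC\<close>)
  have INFX: "(INF Q\<in>DeltaP P. MI_X_YZ Q) = MI_XZ P"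
    by (rule cInf_eq_minimum) (use Q0D Q0C CMI_nonneg DC inv chain1 in \<open>force+\<close>)
  have CIP: "CI P = CMI_XY_Z P" unfolding CI_def INFX using chain1[OF assms(1)] by simp
  have "CMI_XY_Z P = CMI_XZ_Y P" using chain1[OF assms(1)] chain2[OF assms(1)] MIeq by linarith
  thus ?thesis using UIY UIZ SIP MIeq CIP by simp
qed

end
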